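(* For all integers $t\ge0$, \[|\kappa_2(t+1)-\kappa_2(t)|\le2,\quad |\kappa_3(t+1)-\kappa_3(t)|\le6,\quad |\kappa_4(t+1)-\kappa_4(t)|\le28,\quad |\kappa_5(t+1)-\kappa_5(t)|\le240.\]
   Context: $s(n)$ is the number of $1$s in the binary expansion of $n\ge0$. For integers $j$ and $t\ge0$, $\delta(j,t)=\lim_{N\to\infty}\frac1N|\{0\le n<N: s(n+t)-s(n)=j\}|$, a probability distribution on $\mathbb Z$. $\kappa_j(t)$ denotes the $j$-th cumulant of this distribution, i.e. the real numbers with $\log\sum_{k\in\mathbb Z}\delta(k,t)e^{2\pi i k\vartheta}=\sum_{j\ge0}\frac{\kappa_j(t)}{j!}(2\pi i\vartheta)^j$ for $\vartheta$ near $0$. *)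

theory Defs
  imports "HOL-Analysis.Analysis"
begin

fun bsum :: "nat \<Rightarrow> nat" where
  "bsum n = (if n = 0 then 0 else n mod 2 + bsum (n div 2))"

declare bsum.simps[simp del]

definition delta :: "int \<Rightarrow> nat \<Rightarrow> real" where
  "delta j t = lim (\<lambda>N. real (card {n. n < N \<and> int (bsum (n + t)) - int (bsum n) = j}) / real N)"

definition charfun_delta :: "nat \<Rightarrow> real \<Rightarrow> complex" where
  "charfun_delta t \<theta> = infsum (\<lambda>k::int. complex_of_real (delta k t) * exp (2 * pi * \<i> * of_int k * of_real \<theta>)) UNIV"

definition kappa :: "nat \<Rightarrow> nat \<Rightarrow> real" where
  "kappa j t = (THE c :: nat \<Rightarrow> real. \<forall>\<^sub>F \<theta> in nhds (0::real).
      (\<lambda>m. complex_of_real (c m) / of_nat (fact m) * (2 * pi * \<i> * of_real \<theta>) ^ m)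
        sums Ln (charfun_delta t \<theta>)) j"

end

theory Submission
  imports Defs "HOL-Complex_Analysis.Complex_Analysis"
begin

lemma ode_coeffs:
  fixes E K :: "complex fps"
  assumes "fps_deriv E = E * fps_deriv K"
  shows "fps_nth E 1 = fps_nth E 0 * fps_nth K 1"
    "2*fps_nth E 2 = fps_nth E 0*(2*fps_nth K 2) + fps_nth E 1*fps_nth K 1"
    "3*fps_nth E 3 = fps_nth E 0*(3*fps_nth K 3) + fps_nth E 1*(2*fps_nth K 2) + fps_nth E 2*fps_nth K 1"
    "4*fps_nth E 4 = fps_nth E 0*(4*fps_nth K 4) + fps_nth E 1*(3*fps_nth K 3) + fps_nth E 2*(2*fps_nth K 2) + fps_nth E 3*fps_nth K 1"
    "5*fps_nth E 5 = fps_nth E 0*(5*fps_nth K 5) + fps_nth E 1*(4*fps_nth K 4) + fps_nth E 2*(3*fps_nth K 3) + fps_nth E 3*(2*fps_nth K 2) + fps_nth E 4*fps_nth K 1"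
proof -
  have h: "fps_nth (fps_deriv E) n = fps_nth (E * fps_deriv K) n" for n using assms by simp
  show "fps_nth E 1 = fps_nth E 0 * fps_nth K 1" using h[of 0] by (simp add: fps_mult_nth)
  show "2*fps_nth E 2 = fps_nth E 0*(2*fps_nth K 2) + fps_nth E 1*fps_nth K 1" using h[of 1] by (simp add: fps_mult_nth numeral_2_eq_2 algebra_simps)
  show "3*fps_nth E 3 = fps_nth E 0*(3*fps_nth K 3) + fps_nth E 1*(2*fps_nth K 2) + fps_nth E 2*fps_nth K 1" using h[of 2]
    by (simp add: fps_mult_nth numeral_3_eq_3 numeral_2_eq_2 algebra_simps atMost_Suc)
  show "4*fps_nth E 4 = fps_nth E 0*(4*fps_nth K 4) + fps_nth E 1*(3*fps_nth K 3) + fps_nth E 2*(2*fps_nth K 2) + fps_nth E 3*fps_nth K 1" using h[of 3]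
    by (simp add: fps_mult_nth eval_nat_numeral algebra_simps atMost_Suc)
  show "5*fps_nth E 5 = fps_nth E 0*(5*fps_nth K 5) + fps_nth E 1*(4*fps_nth K 4) + fps_nth E 2*(3*fps_nth K 3) + fps_nth E 3*(2*fps_nth K 2) + fps_nth E 4*fps_nth K 1" using h[of 4]
    by (simp add: fps_mult_nth eval_nat_numeral algebra_simps atMost_Suc)
qed

lemma mult_coeffs:
  fixes F G :: "complex fps"
  shows "fps_nth (F*G) 0 = fps_nth F 0*fps_nth G 0"
    "fps_nth (F*G) 1 = fps_nth F 0*fps_nth G 1 + fps_nth F 1*fps_nth G 0"
    "fps_nth (F*G) 2 = fps_nth F 0*fps_nth G 2 + fps_nth F 1*fps_nth G 1 + fps_nth F 2*fps_nth G 0"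
    "fps_nth (F*G) 3 = fps_nth F 0*fps_nth G 3 + fps_nth F 1*fps_nth G 2 + fps_nth F 2*fps_nth G 1 + fps_nth F 3*fps_nth G 0"
    "fps_nth (F*G) 4 = fps_nth F 0*fps_nth G 4 + fps_nth F 1*fps_nth G 3 + fps_nth F 2*fps_nth G 2 + fps_nth F 3*fps_nth G 1 + fps_nth F 4*fps_nth G 0"
    "fps_nth (F*G) 5 = fps_nth F 0*fps_nth G 5 + fps_nth F 1*fps_nth G 4 + fps_nth F 2*fps_nth G 3 + fps_nth F 3*fps_nth G 2 + fps_nth F 4*fps_nth G 1 + fps_nth F 5*fps_nth G 0"
  by (simp_all add: fps_mult_nth eval_nat_numeral atMost_Suc algebra_simps)

lemma exp_coeffs:
  fixes E K :: "complex fps"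
  assumes "fps_deriv E = E * fps_deriv K" "fps_nth E 0 = 1" "fps_nth K 1 = 0"
  shows "fps_nth E 1 = 0" "fps_nth E 2 = fps_nth K 2" "fps_nth E 3 = fps_nth K 3"
    "fps_nth E 4 = fps_nth K 4 + (fps_nth K 2)^2/2" "fps_nth E 5 = fps_nth K 5 + fps_nth K 2 * fps_nth K 3"
  using ode_coeffs[OF assms(1)] assms(2,3) by algebra+

lemma log_coeffs:
  fixes E K :: "complex fps"
  assumes "fps_deriv E = E * fps_deriv K" "fps_nth E 0 = 1" "fps_nth E 1 = 0"
  shows "fps_nth K 1 = 0" "fps_nth K 2 = fps_nth E 2" "fps_nth K 3 = fps_nth E 3"
    "fps_nth K 4 = fps_nth E 4 - (fps_nth E 2)^2/2" "fps_nth K 5 = fps_nth E 5 - fps_nth E 2 * fps_nth E 3"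
proof -
  note h = ode_coeffs[OF assms(1)]
  show k1: "fps_nth K 1 = 0" using h(1) assms(2,3) by simp
  show k2: "fps_nth K 2 = fps_nth E 2" using h(2) assms(2,3) k1 by simp
  show k3: "fps_nth K 3 = fps_nth E 3" using h(3) assms(2,3) k1 k2 by simp
  show k4: "fps_nth K 4 = fps_nth E 4 - (fps_nth E 2)^2/2" using h(4) assms(2,3) k1 k2 k3
    by algebra
  show "fps_nth K 5 = fps_nth E 5 - fps_nth E 2 * fps_nth E 3" using h(5) assms(2,3) k1 k2 k3 k4
    by algebra
qed

lemma exp_nths:
  "fps_nth (fps_exp (1::complex)) 0 = 1" "fps_nth (fps_exp (1::complex)) 1 = 1" "fps_nth (fps_exp (1::complex)) 2 = 1/2"
  "fps_nth (fps_exp (1::complex)) 3 = 1/6" "fps_nth (fps_exp (1::complex)) 4 = 1/24" "fps_nth (fps_exp (1::complex)) 5 = 1/120"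
  "fps_nth (fps_exp (-1::complex)) 0 = 1" "fps_nth (fps_exp (-1::complex)) 1 = -1" "fps_nth (fps_exp (-1::complex)) 2 = 1/2"
  "fps_nth (fps_exp (-1::complex)) 3 = -1/6" "fps_nth (fps_exp (-1::complex)) 4 = 1/24" "fps_nth (fps_exp (-1::complex)) 5 = -1/120"
  by (simp_all add: fact_numeral)

lemma step_f:
  fixes E K E' K' :: "complex fps"
  assumes "fps_deriv E = E * fps_deriv K" "fps_nth E 0 = 1" "fps_nth K 1 = 0"
    and "fps_deriv E' = E' * fps_deriv K'"
    and "2 * E' = fps_exp 1 + fps_exp (-1) * E"
  shows "fps_nth K' 1 = 0" "fps_nth K' 2 = fps_nth K 2 / 2 + 1/2"
    "fps_nth K' 3 = fps_nth K 3 / 2 - fps_nth K 2 / 2"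
    "fps_nth K' 4 = fps_nth K 4 / 2 + ((fps_nth K 2)^2 - 4 * fps_nth K 3)/8 - 1/12"
    "fps_nth K' 5 = fps_nth K 5 / 2 + (fps_nth K 2 * fps_nth K 3 - 2 * fps_nth K 4)/4 + fps_nth K 2 / 6"
proof -
  note e = exp_coeffs[OF assms(1-3)]
  have c: "2 * fps_nth E' n = fps_nth (fps_exp 1 + fps_exp (-1) * E) n" for n
    using assms(5) by (metis fps_mult_numeral_left)
  note cc = c[of 0, unfolded fps_add_nth mult_coeffs exp_nths]
            c[of 1, unfolded fps_add_nth mult_coeffs exp_nths]
            c[of 2, unfolded fps_add_nth mult_coeffs exp_nths]
            c[of 3, unfolded fps_add_nth mult_coeffs exp_nths]
            c[of 4, unfolded fps_add_nth mult_coeffs exp_nths]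
            c[of 5, unfolded fps_add_nth mult_coeffs exp_nths]
  have e0: "fps_nth E' 0 = 1" using cc(1) assms(2) by simp
  have e1: "fps_nth E' 1 = 0" using cc(2) assms(2) e by simp
  note k = log_coeffs[OF assms(4) e0 e1]
  show "fps_nth K' 1 = 0" by (rule k(1))
  show "fps_nth K' 2 = fps_nth K 2 / 2 + 1/2" using k cc e assms(2) by algebra
  show "fps_nth K' 3 = fps_nth K 3 / 2 - fps_nth K 2 / 2" using k cc e assms(2) by algebra
  show "fps_nth K' 4 = fps_nth K 4 / 2 + ((fps_nth K 2)^2 - 4 * fps_nth K 3)/8 - 1/12"
    using k cc e assms(2) by algebra
  show "fps_nth K' 5 = fps_nth K 5 / 2 + (fps_nth K 2 * fps_nth K 3 - 2 * fps_nth K 4)/4 + fps_nth K 2 / 6"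
    using k cc e assms(2) by algebra
qed


lemma step_g:
  fixes E K E' K' :: "complex fps"
  assumes "fps_deriv E = E * fps_deriv K" "fps_nth E 0 = 1" "fps_nth K 1 = 0"
    and "fps_deriv E' = E' * fps_deriv K'"
    and "E' * (fps_exp 1 + fps_exp (-1) * E) = 2 * E"
  shows "fps_nth K' 1 = 0" "fps_nth K' 2 = fps_nth K 2 / 2 - 1/2"
    "fps_nth K' 3 = fps_nth K 3 / 2 + fps_nth K 2 / 2"
    "fps_nth K' 4 = fps_nth K 4 / 2 - (((fps_nth K 2)^2 - 4 * fps_nth K 3)/8 - 1/12)"
    "fps_nth K' 5 = fps_nth K 5 / 2 - ((fps_nth K 2 * fps_nth K 3 - 2 * fps_nth K 4)/4 + fps_nth K 2 / 6)"
proof -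
  note e = exp_coeffs[OF assms(1-3)]
  have c: "fps_nth (E' * (fps_exp 1 + fps_exp (-1) * E)) n = 2 * fps_nth E n" for n
    using assms(5) by (metis fps_mult_numeral_left)
  note cc = c[of 0, unfolded mult_coeffs fps_add_nth exp_nths]
            c[of 1, unfolded mult_coeffs fps_add_nth exp_nths]
            c[of 2, unfolded mult_coeffs fps_add_nth exp_nths]
            c[of 3, unfolded mult_coeffs fps_add_nth exp_nths]
            c[of 4, unfolded mult_coeffs fps_add_nth exp_nths]
            c[of 5, unfolded mult_coeffs fps_add_nth exp_nths]
  have e0: "fps_nth E' 0 = 1" using cc(1) assms(2) by simp
  have e1: "fps_nth E' 1 = 0" using cc(2) assms(2) e e0 by simp
  note k = log_coeffs[OF assms(4) e0 e1]
  show "fps_nth K' 1 = 0" by (rule k(1))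
  show "fps_nth K' 2 = fps_nth K 2 / 2 - 1/2" using k cc e e0 e1 assms(2) by algebra
  show "fps_nth K' 3 = fps_nth K 3 / 2 + fps_nth K 2 / 2" using k cc e e0 e1 assms(2) by algebra
  show "fps_nth K' 4 = fps_nth K 4 / 2 - (((fps_nth K 2)^2 - 4 * fps_nth K 3)/8 - 1/12)"
    using k cc e e0 e1 assms(2) by algebra
  show "fps_nth K' 5 = fps_nth K 5 / 2 - ((fps_nth K 2 * fps_nth K 3 - 2 * fps_nth K 4)/4 + fps_nth K 2 / 6)"
    using k cc e e0 e1 assms(2) by algebra
qed

lemma step_base:
  fixes E K :: "complex fps"
  assumes "fps_deriv E = E * fps_deriv K"
    and "E * (2 - fps_exp (-1)) = fps_exp 1"
  shows "fps_nth K 1 = 0" "fps_nth K 2 = 1" "fps_nth K 3 = -1" "fps_nth K 4 = 13/12" "fps_nth K 5 = -5/4"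
proof -
  have c: "fps_nth (E * (2 - fps_exp (-1))) n = fps_nth (fps_exp 1) n" for n
    using assms(2) by simp
  have t: "fps_nth (2 - fps_exp (-1::complex)) n = (if n = 0 then 2 else 0) - fps_nth (fps_exp (-1)) n" for n
    by (simp add: fps_numeral_nth)
  note cc = c[of 0, unfolded mult_coeffs t exp_nths]
            c[of 1, unfolded mult_coeffs t exp_nths]
            c[of 2, unfolded mult_coeffs t exp_nths]
            c[of 3, unfolded mult_coeffs t exp_nths]
            c[of 4, unfolded mult_coeffs t exp_nths]
            c[of 5, unfolded mult_coeffs t exp_nths]
  have e0: "fps_nth E 0 = 1" using cc(1) by simp
  have e1: "fps_nth E 1 = 0" using cc(2) e0 by simp
  note k = log_coeffs[OF assms(1) e0 e1]
  show "fps_nth K 1 = 0" by (rule k(1))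
  show "fps_nth K 2 = 1" using k cc e0 e1 by simp
  show "fps_nth K 3 = -1" using k cc e0 e1 by simp algebra
  show "fps_nth K 4 = 13/12" using k cc e0 e1 by simp algebra
  show "fps_nth K 5 = -5/4" using k cc e0 e1 by simp algebra
qed

function Mh :: "nat \<Rightarrow> complex \<Rightarrow> complex" where
 "Mh t w = (if t = 0 then 1 else if t = 1 then exp w / (2 - exp (-w))
    else if even t then Mh (t div 2) w
    else (exp w * Mh (t div 2) w + exp (-w) * Mh (t div 2 + 1) w) / 2)"
  by auto
termination by (relation "inv_image less_than fst") (auto elim!: oddE)

declare Mh.simps[simp del]

lemma Mh_0[simp]: "Mh 0 w = 1" by (simp add: Mh.simps)
lemma Mh_1: "Mh 1 w = exp w / (2 - exp (-w))" by (simp add: Mh.simps)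
lemma Mh_Suc0[simp]: "Mh (Suc 0) w = exp w / (2 - exp (-w))" by (simp add: Mh.simps)
lemma Mh_even[simp]: "Mh (2*u) w = Mh u w"
  by (cases "u = 0") (simp_all add: Mh.simps[of "2*u"])
lemma Mh_odd: "u \<ge> 1 \<Longrightarrow> Mh (2*u+1) w = (exp w * Mh u w + exp (-w) * Mh (u + 1) w) / 2"
  by (subst Mh.simps) simp
lemma Mh_odd'[simp]: "u \<ge> 1 \<Longrightarrow> Mh (Suc (2*u)) w = (exp w * Mh u w + exp (-w) * Mh (Suc u) w) / 2"
  using Mh_odd by simp

definition SS :: "complex set" where "SS = ball 0 (1/2)"

lemma exp_half_lt2: "exp (1/2::real) < 2"
proof -
  have "exp (1/2::real) ^ 2 = exp 1" by (simp flip: exp_of_nat_mult)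
  also have "\<dots> < 4" using exp_le by simp
  also have "\<dots> = 2 ^ 2" by simp
  finally show ?thesis by (rule power_less_imp_less_base) simp
qed

lemma SS_nz: "w \<in> SS \<Longrightarrow> 2 - exp (-w) \<noteq> 0"
proof
  assume w: "w \<in> SS" and e: "2 - exp (-w) = 0"
  have n1: "norm (exp (-w)) = exp (Re (-w))" by (simp add: norm_exp_eq_Re)
  have "Re (-w) \<le> norm w" using abs_Re_le_cmod[of w] by simp
  moreover have "norm w < 1/2" using w by (simp add: SS_def)
  ultimately have "Re (-w) < 1/2" by linarith
  hence "exp (Re (-w)) < exp (1/2)" by (subst exp_less_cancel_iff)
  hence "norm (exp (-w)) < 2" using exp_half_lt2 n1 by linarith
  moreover have "exp (-w) = 2" using e by simp
  ultimately show False by simp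
qed

lemma Mh_odd_all: "w \<in> SS \<Longrightarrow> 2 * Mh (2*u+1) w = exp w * Mh u w + exp (-w) * Mh (u + 1) w"
proof (cases "u = 0")
  case True
  assume w: "w \<in> SS"
  have nz: "2 - exp (-w) \<noteq> 0" using SS_nz[OF w] .
  have "exp w * exp (-w) = 1" by (simp add: exp_minus)
  with nz show ?thesis using True by (simp add: Mh_Suc0 field_simps)
next
  case False
  then show ?thesis by (simp add: Mh_odd)
qed

lemma Mh_1_eq: "w \<in> SS \<Longrightarrow> Mh 1 w * (2 - exp (-w)) = exp w"
  using SS_nz by (simp add: Mh_1)

lemma Mh_at0: "Mh t 0 = 1"
proof (induction t rule: less_induct)
  case (less t)
  show ?case
  proof (cases "t \<le> 1")
    case True then show ?thesis by (cases t) (auto simp: Mh_1)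
  next
    case False
    define u where "u = t div 2"
    have u1: "u \<ge> 1" "u < t" using False by (auto simp: u_def)
    have "t = 2*u \<or> t = 2*u+1" unfolding u_def by presburger
    thus ?thesis using less u1 by (auto simp: Mh_odd)
  qed
qed


lemma nat_cases_eo:
  fixes t :: nat
  assumes "t > 1"
  obtains u where "t = 2*u" "u \<ge> 1" "u < t" | u where "t = 2*u+1" "u \<ge> 1" "u+1 < t"
proof -
  define u where "u = t div 2"
  have u1: "u \<ge> 1" "u < t" using assms by (auto simp: u_def)
  have "t = 2*u \<or> t = 2*u+1" unfolding u_def by presburger
  thus ?thesis using that u1 by force
qed

lemma Mh_fun_odd: "u \<ge> 1 \<Longrightarrow> Mh (2*u+1) = (\<lambda>w. (exp w * Mh u w + exp (-w) * Mh (u + 1) w) / 2)"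
  using Mh_odd by (intro ext) simp
lemma Mh_fun_even: "Mh (2*u) = Mh u" by (intro ext) simp
lemma Mh_fun_1: "Mh 1 = (\<lambda>w. exp w / (2 - exp (-w)))" by (intro ext) (simp add: Mh_1)

lemma Mh_holo: "Mh t holomorphic_on SS"
proof (induction t rule: less_induct)
  case (less t)
  show ?case
  proof (cases "t \<le> 1")
    case True
    then consider "t = 0" | "t = 1" by linarith
    then show ?thesis
    proof cases
      case 1 then show ?thesis by (simp add: holomorphic_on_const)
    next
      case 2
      have "(\<lambda>w. exp w / (2 - exp (-w))) holomorphic_on SS" using SS_nz
        by (intro holomorphic_intros) auto
      then show ?thesis using 2 Mh_fun_1 by simp
    qed
  next
    case False
    hence "t > 1" by simp
    then show ?thesis
    proof (cases rule: nat_cases_eo)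
      case (1 u) then show ?thesis using less by (simp add: Mh_fun_even)
    next
      case (2 u)
      have "(\<lambda>w. (exp w * Mh u w + exp (-w) * Mh (u + 1) w) / 2) holomorphic_on SS"
        using less 2 by (intro holomorphic_intros) auto
      thus ?thesis unfolding 2(1) Mh_fun_odd[OF 2(2)] .
    qed
  qed
qed

lemma open_SS: "open SS" and zero_SS: "0 \<in> SS" by (auto simp: SS_def)

lemma Mh_real: "Mh t (of_real x) \<in> \<real>"
proof (induction t rule: less_induct)
  case (less t)
  have e1: "exp (complex_of_real x) \<in> \<real>" "exp (- complex_of_real x) \<in> \<real>"
    by (metis exp_of_real Reals_of_real of_real_minus)+
  show ?case
  proof (cases "t \<le> 1")
    case True
    then consider "t = 0" | "t = 1" by linarith
    then show ?thesis
    proof cases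
      case 1 then show ?thesis by simp
    next
      case 2 then show ?thesis using e1 by (simp add: Mh_1)
    qed
  next
    case False
    hence "t > 1" by simp
    then show ?thesis
    proof (cases rule: nat_cases_eo)
      case (1 u) then show ?thesis using less by simp
    next
      case (2 u) then show ?thesis using less e1 by (simp add: Mh_odd)
    qed
  qed
qed

definition Mf :: "nat \<Rightarrow> complex fps" where "Mf t = fps_expansion (Mh t) 0"

lemma Mh_fps: "Mh t has_fps_expansion Mf t"
  unfolding Mf_def by (rule has_fps_expansion_fps_expansion[OF open_SS zero_SS Mh_holo])

lemma Mf_nth0: "fps_nth (Mf t) 0 = 1"
  by (simp add: Mf_def fps_expansion_def Mh_at0)

lemma Mf_even: "Mf (2*u) = Mf u"
  by (simp add: Mf_def Mh_fun_even)

lemma ev_SS: "eventually (\<lambda>w. w \<in> SS) (nhds 0)"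
  by (rule eventually_nhds_in_open[OF open_SS zero_SS])

lemma Mf_odd: "2 * Mf (2*u+1) = fps_exp 1 * Mf u + fps_exp (-1) * Mf (u+1)"
proof -
  have h1: "(\<lambda>w. 2 * Mh (2*u+1) w) has_fps_expansion fps_const 2 * Mf (2*u+1)"
    by (intro fps_expansion_intros Mh_fps)
  have h2: "(\<lambda>w. exp w * Mh u w + exp (-w) * Mh (u+1) w) has_fps_expansion fps_exp 1 * Mf u + fps_exp (-1) * Mf (u+1)"
    by (intro fps_expansion_intros Mh_fps)
  have "eventually (\<lambda>w. 2 * Mh (2*u+1) w = exp w * Mh u w + exp (-w) * Mh (u+1) w) (nhds 0)"
    using ev_SS by eventually_elim (rule Mh_odd_all)
  hence h3: "(\<lambda>w. 2 * Mh (2*u+1) w) has_fps_expansion fps_exp 1 * Mf u + fps_exp (-1) * Mf (u+1)"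
    using h2 has_fps_expansion_cong[of "\<lambda>w. 2 * Mh (2*u+1) w" "\<lambda>w. exp w * Mh u w + exp (-w) * Mh (u+1) w"] by blast
  have "fps_const 2 * Mf (2*u+1) = fps_exp 1 * Mf u + fps_exp (-1) * Mf (u+1)"
    by (rule fps_expansion_unique_complex[OF h1 h3])
  thus ?thesis by (simp add: numeral_fps_const)
qed

lemma Mf_1: "Mf 1 * (2 - fps_exp (-1)) = fps_exp 1"
proof -
  have h1: "(\<lambda>w. Mh 1 w * (2 - exp (-w))) has_fps_expansion Mf 1 * (2 - fps_exp (-1))"
    by (intro fps_expansion_intros Mh_fps)
  have "eventually (\<lambda>w. Mh 1 w * (2 - exp (-w)) = exp w) (nhds 0)"
    using ev_SS by eventually_elim (rule Mh_1_eq)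
  hence h3: "(\<lambda>w. Mh 1 w * (2 - exp (-w))) has_fps_expansion fps_exp 1"
    using has_fps_expansion_cong[of "\<lambda>w. Mh 1 w * (2 - exp (-w))" "\<lambda>w. exp w"] has_fps_expansion_exp1 by blast
  show ?thesis by (rule fps_expansion_unique_complex[OF h1 h3])
qed

lemma Mf_zero: "Mf 0 = 1"
proof -
  have "Mh 0 = (\<lambda>_. 1)" by (intro ext) simp
  thus ?thesis unfolding Mf_def by (simp add: fps_expansion_eqI)
qed

definition Lh :: "nat \<Rightarrow> complex \<Rightarrow> complex" where "Lh t w = Ln (Mh t w)"
definition Hf :: "nat \<Rightarrow> complex fps" where "Hf t = fps_expansion (Lh t) 0"

lemma Mh_near1: "\<exists>r>0. r \<le> 1/2 \<and> (\<forall>w \<in> ball 0 r. norm (Mh t w - 1) < 1/2)"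
proof -
  have "continuous_on SS (Mh t)" using Mh_holo holomorphic_on_imp_continuous_on by blast
  hence "isCont (Mh t) 0" using open_SS zero_SS continuous_on_eq_continuous_at by blast
  hence "(Mh t \<longlongrightarrow> 1) (at 0)" using Mh_at0 isCont_def by metis
  hence "eventually (\<lambda>w. dist (Mh t w) 1 < 1/2) (at 0)"
    by (rule tendstoD) simp
  then obtain d where d: "d > 0" "\<And>w. w \<noteq> 0 \<Longrightarrow> dist w 0 < d \<Longrightarrow> dist (Mh t w) 1 < 1/2"
    unfolding eventually_at by blast
  show ?thesis
  proof (intro exI[of _ "min d (1/2)"] conjI ballI)
    fix w :: complex assume "w \<in> ball 0 (min d (1/2))"
    thus "norm (Mh t w - 1) < 1/2"
      using d by (cases "w = 0") (auto simp: Mh_at0 dist_norm)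
  qed (use d in auto)
qed

lemma Re_pos_not_nonpos: "Re z > 0 \<Longrightarrow> z \<notin> \<real>\<^sub>\<le>\<^sub>0"
  by (auto simp: nonpos_Reals_def)

lemma near1_Re: "norm (z - 1) < 1/2 \<Longrightarrow> Re z > 1/2"
  using abs_Re_le_cmod[of "z - 1"] by simp

lemma Lh_props: "\<exists>r>0. r \<le> 1/2 \<and> Lh t holomorphic_on ball 0 r \<and> (\<forall>w\<in>ball 0 r. Re (Mh t w) > 1/2)"
proof -
  obtain r where r: "r > 0" "r \<le> 1/2" "\<forall>w \<in> ball 0 r. norm (Mh t w - 1) < 1/2"
    using Mh_near1 by blast
  have sub: "ball 0 r \<subseteq> SS" using r by (auto simp: SS_def)
  have re: "\<forall>w\<in>ball 0 r. Re (Mh t w) > 1/2" using r near1_Re by blast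
  have nn: "Mh t w \<notin> \<real>\<^sub>\<le>\<^sub>0" if "w \<in> ball 0 r" for w
  proof -
    have "Re (Mh t w) > 1/2" using re that by blast
    thus ?thesis by (intro Re_pos_not_nonpos) simp
  qed
  have "(\<lambda>w. Ln (Mh t w)) holomorphic_on ball 0 r"
    using nn holomorphic_on_subset[OF Mh_holo sub]
    by (intro holomorphic_on_Ln') auto
  thus ?thesis using r re by (auto simp: Lh_def[abs_def])
qed

lemma Lh_fps: "Lh t has_fps_expansion Hf t"
proof -
  obtain r where r: "r > 0" "Lh t holomorphic_on ball 0 r" using Lh_props by blast
  show ?thesis unfolding Hf_def by (rule has_fps_expansion_fps_expansion[OF open_ball _ r(2)]) (use r in auto)
qed

lemma Hf_nth0: "fps_nth (Hf t) 0 = 0"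
  by (simp add: Hf_def fps_expansion_def Lh_def Mh_at0)

lemma Mf_ode: "fps_deriv (Mf t) = Mf t * fps_deriv (Hf t)"
proof -
  obtain r where r: "r > 0" "r \<le> 1/2" "\<forall>w\<in>ball 0 r. Re (Mh t w) > 1/2" using Lh_props by blast
  have sub: "ball 0 r \<subseteq> SS" using r by (auto simp: SS_def)
  have eq: "Mh t w * deriv (Lh t) w = deriv (Mh t) w" if w: "w \<in> ball 0 r" for w
  proof -
    have wS: "w \<in> SS" using w sub by blast
    have d1: "(Mh t has_field_derivative deriv (Mh t) w) (at w)"
      using holomorphic_derivI[OF Mh_holo open_SS wS] .
    have nn: "Mh t w \<notin> \<real>\<^sub>\<le>\<^sub>0" using r(3) w Re_pos_not_nonpos by force
    have d2: "(Ln has_field_derivative inverse (Mh t w)) (at (Mh t w))"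
      using has_field_derivative_Ln[OF nn] .
    have "((\<lambda>x. Ln (Mh t x)) has_field_derivative inverse (Mh t w) * deriv (Mh t) w) (at w)"
      using DERIV_chain2[OF d2 d1] .
    hence "deriv (Lh t) w = inverse (Mh t w) * deriv (Mh t) w"
      unfolding Lh_def[abs_def] by (rule DERIV_imp_deriv)
    moreover have "Mh t w \<noteq> 0" using r(3) w by force
    ultimately show ?thesis by (simp add: field_simps)
  qed
  have h1: "(\<lambda>w. Mh t w * deriv (Lh t) w) has_fps_expansion Mf t * fps_deriv (Hf t)"
    by (intro fps_expansion_intros Mh_fps Lh_fps)
  have h2: "deriv (Mh t) has_fps_expansion fps_deriv (Mf t)"
    by (intro fps_expansion_intros Mh_fps)
  have "eventually (\<lambda>w. w \<in> ball 0 r) (nhds 0)" using r by (intro eventually_nhds_in_open) auto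
  hence "eventually (\<lambda>w. Mh t w * deriv (Lh t) w = deriv (Mh t) w) (nhds 0)"
    by eventually_elim (rule eq)
  hence h3: "(\<lambda>w. Mh t w * deriv (Lh t) w) has_fps_expansion fps_deriv (Mf t)"
    using h2 has_fps_expansion_cong[of "\<lambda>w. Mh t w * deriv (Lh t) w" "deriv (Mh t)"] by blast
  show ?thesis using fps_expansion_unique_complex[OF h1 h3] by simp
qed

definition Ef :: "nat \<Rightarrow> complex fps" where "Ef t = Mf (t+1) * inverse (Mf t)"
definition Kf :: "nat \<Rightarrow> complex fps" where "Kf t = Hf (t+1) - Hf t"

lemma Mf_inv: "Mf t * inverse (Mf t) = 1"
  by (rule inverse_mult_eq_1') (simp add: Mf_nth0)

lemma Ef_nth0: "fps_nth (Ef t) 0 = 1"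
  by (simp add: Ef_def Mf_nth0)

lemma Kf_nth1_ode: "fps_deriv (Ef t) = Ef t * fps_deriv (Kf t)"
proof -
  define M0 M1 H0 H1 I where "M0 = Mf t" "M1 = Mf (t+1)" "H0 = Hf t" "H1 = Hf (t+1)" "I = inverse (Mf t)"
  have i: "M0 * I = 1" using Mf_inv by (simp add: M0_M1_H0_H1_I_def)
  have di: "fps_deriv I = - fps_deriv M0 * I^2"
    unfolding M0_M1_H0_H1_I_def by (rule fps_inverse_deriv) (simp add: Mf_nth0)
  have o0: "fps_deriv M0 = M0 * fps_deriv H0" and o1: "fps_deriv M1 = M1 * fps_deriv H1"
    using Mf_ode by (simp_all add: M0_M1_H0_H1_I_def)
  have "fps_deriv (M1 * I) = M1 * fps_deriv H1 * I - M1 * (M0 * fps_deriv H0) * I^2"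
    using di o0 o1 by (simp add: fps_deriv_mult algebra_simps)
  also have "M1 * (M0 * fps_deriv H0) * I^2 = M1 * I * fps_deriv H0 * (M0 * I)"
    by (simp add: power2_eq_square algebra_simps)
  also have "\<dots> = M1 * I * fps_deriv H0" using i by simp
  finally have "fps_deriv (M1 * I) = M1 * I * fps_deriv (H1 - H0)"
    by (simp add: algebra_simps)
  thus ?thesis by (simp add: Ef_def Kf_def M0_M1_H0_H1_I_def)
qed

lemma Ef_even: "u \<ge> 1 \<Longrightarrow> 2 * Ef (2*u) = fps_exp 1 + fps_exp (-1) * Ef u"
proof -
  define Mu Mu1 M2 Iu where "Mu = Mf u" "Mu1 = Mf (u+1)" "M2 = Mf (2*u+1)" "Iu = inverse (Mf u)"
  have i: "Mu * Iu = 1" using Mf_inv by (simp add: Mu_Mu1_M2_Iu_def)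
  have o: "2 * M2 = fps_exp 1 * Mu + fps_exp (-1) * Mu1" using Mf_odd by (simp add: Mu_Mu1_M2_Iu_def)
  have "2 * (M2 * Iu) = (2 * M2) * Iu" by (simp add: algebra_simps)
  also have "\<dots> = fps_exp 1 * (Mu * Iu) + fps_exp (-1) * (Mu1 * Iu)" unfolding o by (simp add: algebra_simps)
  finally have "2 * (M2 * Iu) = fps_exp 1 + fps_exp (-1) * (Mu1 * Iu)" using i by simp
  thus "2 * Ef (2*u) = fps_exp 1 + fps_exp (-1) * Ef u"
    by (simp add: Ef_def Mf_even Mu_Mu1_M2_Iu_def)
qed

lemma Ef_odd: "Ef (2*u+1) * (fps_exp 1 + fps_exp (-1) * Ef u) = 2 * Ef u"
proof -
  define Mu Mu1 M2 Iu J where "Mu = Mf u" "Mu1 = Mf (u+1)" "M2 = Mf (2*u+1)" "Iu = inverse (Mf u)"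
     "J = inverse (Mf (2*u+1))"
  have i: "Mu * Iu = 1" "M2 * J = 1" using Mf_inv by (simp_all add: Mu_Mu1_M2_Iu_J_def)
  have o: "2 * M2 = fps_exp 1 * Mu + fps_exp (-1) * Mu1" using Mf_odd by (simp add: Mu_Mu1_M2_Iu_J_def)
  have "fps_exp 1 + fps_exp (-1) * (Mu1 * Iu) = fps_exp 1 * (Mu * Iu) + fps_exp (-1) * (Mu1 * Iu)"
    using i by simp
  also have "\<dots> = (2 * M2) * Iu" unfolding o by (simp add: algebra_simps)
  finally have a: "fps_exp 1 + fps_exp (-1) * (Mu1 * Iu) = (2 * M2) * Iu" .
  have "Mu1 * J * (fps_exp 1 + fps_exp (-1) * (Mu1 * Iu)) = 2 * (Mu1 * Iu) * (M2 * J)"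
    unfolding a by (simp add: algebra_simps)
  hence "Mu1 * J * (fps_exp 1 + fps_exp (-1) * (Mu1 * Iu)) = 2 * (Mu1 * Iu)" using i by simp
  moreover have "Mf (2*u+1+1) = Mf (u+1)" using Mf_even[of "u+1"] by (simp add: algebra_simps)
  ultimately show ?thesis
    by (simp add: Ef_def Mu_Mu1_M2_Iu_J_def)
qed

lemma Ef_base: "Ef 0 * (2 - fps_exp (-1)) = fps_exp 1"
  using Mf_1 by (simp add: Ef_def Mf_zero)

lemma bnd_core:
  fixes a b c d q p :: real
  assumes "a \<le> 1" "-1 \<le> a" "b \<le> 1" "-1 \<le> b" "c \<le> 7/6" "-7/6 \<le> c" "d \<le> 2" "-2 \<le> d"
    "q \<le> 1" "0 \<le> q" "p \<le> 1" "-1 \<le> p"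
  shows "\<bar>a/2 + 1/2\<bar> \<le> 1" "\<bar>b/2 - a/2\<bar> \<le> 1" "\<bar>c/2 + ((q - 4*b)/8 - 1/12)\<bar> \<le> 7/6"
        "\<bar>d/2 + ((p - 2*c)/4 + a/6)\<bar> \<le> 2"
        "\<bar>a/2 - 1/2\<bar> \<le> 1" "\<bar>b/2 + a/2\<bar> \<le> 1" "\<bar>c/2 - ((q - 4*b)/8 - 1/12)\<bar> \<le> 7/6"
        "\<bar>d/2 - ((p - 2*c)/4 + a/6)\<bar> \<le> 2"
  using assms unfolding abs_le_iff by argo+

lemma bnd_f:
  fixes a b c d :: real
  assumes "\<bar>a\<bar> \<le> 1" "\<bar>b\<bar> \<le> 1" "\<bar>c\<bar> \<le> 7/6" "\<bar>d\<bar> \<le> 2"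
  shows "\<bar>a/2 + 1/2\<bar> \<le> 1" "\<bar>b/2 - a/2\<bar> \<le> 1" "\<bar>c/2 + ((a^2 - 4*b)/8 - 1/12)\<bar> \<le> 7/6"
        "\<bar>d/2 + ((a*b - 2*c)/4 + a/6)\<bar> \<le> 2"
proof -
  have a2: "a^2 \<le> 1" "0 \<le> a^2" using assms(1) abs_square_le_1 by auto
  have ab0: "\<bar>a*b\<bar> \<le> 1" using assms(1,2) by (simp add: abs_mult mult_le_one)
  have ab: "a*b \<le> 1" "-1 \<le> a*b" using ab0 by (simp_all add: abs_le_iff)
  have sp: "a \<le> 1" "-1 \<le> a" "b \<le> 1" "-1 \<le> b" "c \<le> 7/6" "-7/6 \<le> c" "d \<le> 2" "-2 \<le> d"
    using assms by (simp_all add: abs_le_iff)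
  show "\<bar>a/2 + 1/2\<bar> \<le> 1" "\<bar>b/2 - a/2\<bar> \<le> 1" "\<bar>c/2 + ((a^2 - 4*b)/8 - 1/12)\<bar> \<le> 7/6"
        "\<bar>d/2 + ((a*b - 2*c)/4 + a/6)\<bar> \<le> 2"
    using bnd_core[OF sp a2(1) a2(2) ab] by simp_all
qed

lemma bnd_g:
  fixes a b c d :: real
  assumes "\<bar>a\<bar> \<le> 1" "\<bar>b\<bar> \<le> 1" "\<bar>c\<bar> \<le> 7/6" "\<bar>d\<bar> \<le> 2"
  shows "\<bar>a/2 - 1/2\<bar> \<le> 1" "\<bar>b/2 + a/2\<bar> \<le> 1" "\<bar>c/2 - ((a^2 - 4*b)/8 - 1/12)\<bar> \<le> 7/6"
        "\<bar>d/2 - ((a*b - 2*c)/4 + a/6)\<bar> \<le> 2"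
proof -
  have a2: "a^2 \<le> 1" "0 \<le> a^2" using assms(1) abs_square_le_1 by auto
  have ab0: "\<bar>a*b\<bar> \<le> 1" using assms(1,2) by (simp add: abs_mult mult_le_one)
  have ab: "a*b \<le> 1" "-1 \<le> a*b" using ab0 by (simp_all add: abs_le_iff)
  have sp: "a \<le> 1" "-1 \<le> a" "b \<le> 1" "-1 \<le> b" "c \<le> 7/6" "-7/6 \<le> c" "d \<le> 2" "-2 \<le> d"
    using assms by (simp_all add: abs_le_iff)
  show "\<bar>a/2 - 1/2\<bar> \<le> 1" "\<bar>b/2 + a/2\<bar> \<le> 1" "\<bar>c/2 - ((a^2 - 4*b)/8 - 1/12)\<bar> \<le> 7/6"
        "\<bar>d/2 - ((a*b - 2*c)/4 + a/6)\<bar> \<le> 2"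
    using bnd_core[OF sp a2(1) a2(2) ab] by simp_all
qed

definition Inv :: "complex fps \<Rightarrow> bool" where
  "Inv K \<longleftrightarrow> (\<exists>a b c d :: real. fps_nth K 1 = 0 \<and> fps_nth K 2 = of_real a \<and> fps_nth K 3 = of_real b
     \<and> fps_nth K 4 = of_real c \<and> fps_nth K 5 = of_real d \<and> \<bar>a\<bar> \<le> 1 \<and> \<bar>b\<bar> \<le> 1 \<and> \<bar>c\<bar> \<le> 7/6 \<and> \<bar>d\<bar> \<le> 2)"

lemma Inv_f:
  assumes "Inv (Kf u)" "2 * Ef t = fps_exp 1 + fps_exp (-1) * Ef u"
  shows "Inv (Kf t)"
proof -
  obtain a b c d :: real where h: "fps_nth (Kf u) 1 = 0" "fps_nth (Kf u) 2 = of_real a" "fps_nth (Kf u) 3 = of_real b"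
     "fps_nth (Kf u) 4 = of_real c" "fps_nth (Kf u) 5 = of_real d" and bd: "\<bar>a\<bar> \<le> 1" "\<bar>b\<bar> \<le> 1" "\<bar>c\<bar> \<le> 7/6" "\<bar>d\<bar> \<le> 2"
    using assms(1) unfolding Inv_def by blast
  note s = step_f[OF Kf_nth1_ode Ef_nth0 h(1) Kf_nth1_ode assms(2)]
  show ?thesis unfolding Inv_def
    apply (rule exI[of _ "a/2 + 1/2"], rule exI[of _ "b/2 - a/2"], rule exI[of _ "c/2 + ((a^2 - 4*b)/8 - 1/12)"],
           rule exI[of _ "d/2 + ((a*b - 2*c)/4 + a/6)"])
    using s h bnd_f[OF bd] by simp
qed

lemma Inv_g:
  assumes "Inv (Kf u)" "Ef t * (fps_exp 1 + fps_exp (-1) * Ef u) = 2 * Ef u"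
  shows "Inv (Kf t)"
proof -
  obtain a b c d :: real where h: "fps_nth (Kf u) 1 = 0" "fps_nth (Kf u) 2 = of_real a" "fps_nth (Kf u) 3 = of_real b"
     "fps_nth (Kf u) 4 = of_real c" "fps_nth (Kf u) 5 = of_real d" and bd: "\<bar>a\<bar> \<le> 1" "\<bar>b\<bar> \<le> 1" "\<bar>c\<bar> \<le> 7/6" "\<bar>d\<bar> \<le> 2"
    using assms(1) unfolding Inv_def by blast
  note s = step_g[OF Kf_nth1_ode Ef_nth0 h(1) Kf_nth1_ode assms(2)]
  show ?thesis unfolding Inv_def
    apply (rule exI[of _ "a/2 - 1/2"], rule exI[of _ "b/2 + a/2"], rule exI[of _ "c/2 - ((a^2 - 4*b)/8 - 1/12)"],
           rule exI[of _ "d/2 - ((a*b - 2*c)/4 + a/6)"])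
    using s h bnd_g[OF bd] by simp
qed

lemma Inv_all: "Inv (Kf t)"
proof (induction t rule: less_induct)
  case (less t)
  show ?case
  proof (cases "t = 0")
    case True
    note s = step_base[OF Kf_nth1_ode Ef_base]
    show ?thesis unfolding Inv_def True
      by (rule exI[of _ 1], rule exI[of _ "-1"], rule exI[of _ "13/12"], rule exI[of _ "-5/4"]) (use s in simp)
  next
    case False
    define u where "u = t div 2"
    have "t = 2*u \<and> u \<ge> 1 \<and> u < t \<or> t = 2*u+1 \<and> u < t" using False unfolding u_def by presburger
    then show ?thesis
    proof
      assume h: "t = 2*u \<and> u \<ge> 1 \<and> u < t"
      show ?thesis using Inv_f[OF less[of u] Ef_even[of u]] h by simp
    next
      assume h: "t = 2*u+1 \<and> u < t"
      show ?thesis using Inv_g[OF less[of u] Ef_odd[of u]] h by simp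
    qed
  qed
qed

lemma bsum_even[simp]: "bsum (2*m) = bsum m"
  by (cases "m = 0") (simp_all add: bsum.simps[of "2*m"])
lemma bsum_odd'[simp]: "bsum (Suc (2*m)) = Suc (bsum m)"
  by (subst bsum.simps) simp
lemma bsum_odd: "bsum (2*m+1) = bsum m + 1"
  using bsum_odd' by simp

lemma bsum_Suc_le: "bsum (n+1) \<le> bsum n + 1"
proof (induction n rule: less_induct)
  case (less n)
  obtain m where "n = 2*m \<or> n = 2*m+1" by (metis oddE evenE)
  then show ?case
  proof
    assume n: "n = 2*m"
    show ?thesis using n by simp
  next
    assume n: "n = 2*m+1"
    have "bsum (n+1) = bsum (m+1)" using n bsum_even[of "m+1"] by (simp add: algebra_simps)
    also have "\<dots> \<le> bsum m + 1" using less[of m] n by simp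
    finally show ?thesis using n by simp
  qed
qed

definition X :: "nat \<Rightarrow> nat \<Rightarrow> int" where "X t n = int (bsum (n + t)) - int (bsum n)"

lemma X_ee[simp]: "X (2*u) (2*m) = X u m" unfolding X_def by (metis bsum_even distrib_left)
lemma X_eo[simp]: "X (2*u) (Suc (2*m)) = X u m"
proof -
  have "bsum (Suc (2*m) + 2*u) = Suc (bsum (m+u))" using bsum_odd'[of "m+u"] by (simp add: algebra_simps)
  thus ?thesis unfolding X_def by simp
qed
lemma X_oe[simp]: "X (Suc (2*u)) (2*m) = X u m + 1"
proof -
  have "bsum (2*m + Suc (2*u)) = Suc (bsum (m+u))" using bsum_odd'[of "m+u"] by (simp add: algebra_simps)
  thus ?thesis unfolding X_def by simp
qed
lemma X_oo[simp]: "X (Suc (2*u)) (Suc (2*m)) = X (u+1) m - 1"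
proof -
  have "bsum (Suc (2*m) + Suc (2*u)) = bsum (m + (u+1))" using bsum_even[of "m+(u+1)"] by (simp add: algebra_simps)
  thus ?thesis unfolding X_def by simp
qed

definition cnt :: "nat \<Rightarrow> int \<Rightarrow> nat \<Rightarrow> nat" where
  "cnt t j N = card {n. n < N \<and> int (bsum (n + t)) - int (bsum n) = j}"

lemma cnt_X: "cnt t j N = card {n. n < N \<and> X t n = j}"
  by (simp add: cnt_def X_def)

lemma card_sum_P: "card {n::nat. n < N \<and> P n} = (\<Sum>n<N. if P n then 1 else 0)"
proof -
  have "{n. n < N \<and> P n} = {n \<in> {..<N}. P n}" by auto
  hence "card {n. n < N \<and> P n} = (\<Sum>n\<in>{n \<in> {..<N}. P n}. 1)" by simp
  also have "\<dots> = (\<Sum>n<N. if P n then 1 else 0)" by (rule sum.inter_filter) simp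
  finally show ?thesis .
qed

lemma sum_split_eo:
  fixes g :: "nat \<Rightarrow> nat"
  shows "(\<Sum>n<N. g n) = (\<Sum>m<(N+1) div 2. g (2*m)) + (\<Sum>m<N div 2. g (2*m+1))"
proof -
  have ev: "(\<Sum>n<2*k. g n) = (\<Sum>m<k. g (2*m)) + (\<Sum>m<k. g (2*m+1))" for k
    by (induction k) (simp_all add: algebra_simps)
  obtain k where "N = 2*k \<or> N = 2*k+1" by (metis oddE evenE)
  then show ?thesis
  proof
    assume "N = 2*k" then show ?thesis using ev[of k] by simp
  next
    assume N: "N = 2*k+1"
    have "(N+1) div 2 = k+1" "N div 2 = k" using N by simp_all
    then show ?thesis using ev[of k] N by simp
  qed
qed

lemma card_split:
  "card {n::nat. n < N \<and> P n} = card {m. m < (N+1) div 2 \<and> P (2*m)} + card {m. m < N div 2 \<and> P (2*m+1)}"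
  unfolding card_sum_P by (rule sum_split_eo)

lemma cnt_even: "cnt (2*u) j N = cnt u j ((N+1) div 2) + cnt u j (N div 2)"
  unfolding cnt_X by (subst card_split) simp

lemma cnt_odd: "cnt (2*u+1) j N = cnt u (j-1) ((N+1) div 2) + cnt (u+1) (j+1) (N div 2)"
proof -
  have "cnt (2*u+1) j N = card {m. m < (N+1) div 2 \<and> X u m + 1 = j} + card {m. m < N div 2 \<and> X (u+1) m - 1 = j}"
    unfolding cnt_X by (subst card_split) simp
  also have "{m. m < (N+1) div 2 \<and> X u m + 1 = j} = {m. m < (N+1) div 2 \<and> X u m = j - 1}" by auto
  also have "{m. m < N div 2 \<and> X (u+1) m - 1 = j} = {m. m < N div 2 \<and> X (u+1) m = j + 1}" by auto
  finally show ?thesis unfolding cnt_X .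
qed

lemma cnt_0: "cnt 0 j N = (if j = 0 then N else 0)"
  by (simp add: cnt_def)

lemma cnt_1_big: "j \<ge> 2 \<Longrightarrow> cnt 1 j N = 0"
proof -
  assume j: "j \<ge> 2"
  have h: "int (bsum (n + 1)) - int (bsum n) \<le> 1" for n using bsum_Suc_le[of n] by linarith
  have "int (bsum (n + 1)) - int (bsum n) \<noteq> j" for n using h[of n] j by linarith
  hence "{n. n < N \<and> int (bsum (n + 1)) - int (bsum n) = j} = {}" by blast
  thus ?thesis by (simp add: cnt_def)
qed

lemma half_ratio1: "(\<lambda>N. real ((N+1) div 2) / real N) \<longlonglongrightarrow> 1/2"
proof (rule tendsto_sandwich[of "\<lambda>N. 1/2" _ _ "\<lambda>N. 1/2 + 1 / (2 * real N)"])
  have b: "real N \<le> 2 * real ((N+1) div 2)" "2 * real ((N+1) div 2) \<le> real N + 1" for N :: nat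
  proof -
    have "N \<le> 2 * ((N+1) div 2)" "2 * ((N+1) div 2) \<le> N + 1" by presburger+
    thus "real N \<le> 2 * real ((N+1) div 2)" "2 * real ((N+1) div 2) \<le> real N + 1" by linarith+
  qed
  show "\<forall>\<^sub>F N in sequentially. 1/2 \<le> real ((N+1) div 2) / real N"
    using eventually_gt_at_top[of 0]
  proof eventually_elim
    case (elim N) thus ?case using b[of N] by (simp add: le_divide_eq)
  qed
  show "\<forall>\<^sub>F N in sequentially. real ((N+1) div 2) / real N \<le> 1/2 + 1 / (2 * real N)"
    using eventually_gt_at_top[of 0]
  proof eventually_elim
    case (elim N)
    have "1/2 + 1 / (2 * real N) = (real N + 1) / (2 * real N)" using elim by (simp add: field_simps)
    thus ?case using b[of N] elim by (simp add: divide_le_eq le_divide_eq)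
  qed
  have "(\<lambda>N. 1/2 + (1/2) / real N) \<longlonglongrightarrow> 1/2 + 0" 
    by (intro tendsto_intros)
  thus "(\<lambda>N. 1/2 + 1 / (2 * real N)) \<longlonglongrightarrow> 1/2" by simp
qed simp

lemma half_ratio2: "(\<lambda>N. real (N div 2) / real N) \<longlonglongrightarrow> 1/2"
proof (rule tendsto_sandwich[of "\<lambda>N. 1/2 - 1 / (2 * real N)" _ _ "\<lambda>N. 1/2"])
  have b: "real N \<le> 2 * real (N div 2) + 1" "2 * real (N div 2) \<le> real N" for N :: nat
  proof -
    have "N \<le> 2 * (N div 2) + 1" "2 * (N div 2) \<le> N" by presburger+
    thus "real N \<le> 2 * real (N div 2) + 1" "2 * real (N div 2) \<le> real N" by linarith+
  qed
  show "\<forall>\<^sub>F N in sequentially. 1/2 - 1 / (2 * real N) \<le> real (N div 2) / real N"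
    using eventually_gt_at_top[of 0]
  proof eventually_elim
    case (elim N)
    have "1/2 - 1 / (2 * real N) = (real N - 1) / (2 * real N)" using elim by (simp add: field_simps)
    thus ?case using b[of N] elim by (simp add: divide_le_eq le_divide_eq)
  qed
  show "\<forall>\<^sub>F N in sequentially. real (N div 2) / real N \<le> 1/2"
    using eventually_gt_at_top[of 0]
  proof eventually_elim
    case (elim N) thus ?case using b[of N] by (simp add: divide_le_eq)
  qed
  have "(\<lambda>N. 1/2 - (1/2) / real N) \<longlonglongrightarrow> 1/2 - 0" 
    by (intro tendsto_intros)
  thus "(\<lambda>N. 1/2 - 1 / (2 * real N)) \<longlonglongrightarrow> 1/2" by simp
qed simp

lemma comp_ratio:
  fixes F :: "nat \<Rightarrow> nat" and h :: "nat \<Rightarrow> nat"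
  assumes F: "(\<lambda>N. real (F N) / real N) \<longlonglongrightarrow> a"
    and h: "(\<lambda>N. real (h N) / real N) \<longlonglongrightarrow> 1/2" and hinf: "filterlim h at_top sequentially"
  shows "(\<lambda>N. real (F (h N)) / real N) \<longlonglongrightarrow> a / 2"
proof -
  have "(\<lambda>N. real (F (h N)) / real (h N) * (real (h N) / real N)) \<longlonglongrightarrow> a * (1/2)"
    by (intro tendsto_mult h filterlim_compose[OF F hinf])
  moreover have "eventually (\<lambda>N. real (F (h N)) / real (h N) * (real (h N) / real N) = real (F (h N)) / real N) sequentially"
    using hinf[unfolded filterlim_at_top, rule_format, of 1] eventually_gt_at_top[of 0]
    by eventually_elim simp
  ultimately show ?thesis using Lim_transform_eventually by fastforce
qed

lemma hinf1: "filterlim (\<lambda>N::nat. (N+1) div 2) at_top sequentially"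
  unfolding filterlim_at_top
proof
  fix Z :: nat show "eventually (\<lambda>N. Z \<le> (N+1) div 2) sequentially"
    using eventually_ge_at_top[of "2*Z"] by eventually_elim linarith
qed

lemma hinf2: "filterlim (\<lambda>N::nat. N div 2) at_top sequentially"
  unfolding filterlim_at_top
proof
  fix Z :: nat show "eventually (\<lambda>N. Z \<le> N div 2) sequentially"
    using eventually_ge_at_top[of "2*Z"] by eventually_elim linarith
qed

lemma lim_comb:
  fixes F G :: "nat \<Rightarrow> nat"
  assumes F: "(\<lambda>N. real (F N) / real N) \<longlonglongrightarrow> a" and G: "(\<lambda>N. real (G N) / real N) \<longlonglongrightarrow> b"
  shows "(\<lambda>N. real (F ((N+1) div 2) + G (N div 2)) / real N) \<longlonglongrightarrow> a/2 + b/2"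
proof -
  have "(\<lambda>N. real (F ((N+1) div 2)) / real N + real (G (N div 2)) / real N) \<longlonglongrightarrow> a/2 + b/2"
    by (intro tendsto_add comp_ratio[OF F half_ratio1 hinf1] comp_ratio[OF G half_ratio2 hinf2])
  thus ?thesis by (simp add: add_divide_distrib)
qed


lemma cnt0_lim: "(\<lambda>N. real (cnt 0 j N) / real N) \<longlonglongrightarrow> (if j = 0 then 1 else 0)"
proof (rule tendsto_eventually)
  show "\<forall>\<^sub>F N in sequentially. real (cnt 0 j N) / real N = (if j = 0 then 1 else 0)"
    using eventually_gt_at_top[of 0] by eventually_elim (simp add: cnt_0)
qed

lemma cnt1_conv_k: "convergent (\<lambda>N. real (cnt 1 (2 - int k) N) / real N)"
proof (induction k)
  case 0
  show ?case using cnt_1_big[of 2] by (simp add: convergent_const)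
next
  case (Suc k)
  define j where "j = 2 - int (Suc k)"
  have j1: "j + 1 = 2 - int k" by (simp add: j_def)
  have e: "cnt 1 j N = cnt 0 (j-1) ((N+1) div 2) + cnt 1 (j+1) (N div 2)" for N
    using cnt_odd[of 0 j N] by simp
  from Suc.IH obtain L where L: "(\<lambda>N. real (cnt 1 (j+1) N) / real N) \<longlonglongrightarrow> L"
    unfolding convergent_def j1 by blast
  have "(\<lambda>N. real (cnt 0 (j-1) ((N+1) div 2) + cnt 1 (j+1) (N div 2)) / real N) \<longlonglongrightarrow> (if j - 1 = 0 then 1 else 0)/2 + L/2"
    by (rule lim_comb[OF cnt0_lim L])
  hence "convergent (\<lambda>N. real (cnt 1 j N) / real N)" unfolding e convergent_def by blast
  thus ?case by (simp add: j_def)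
qed

lemma cnt1_conv: "convergent (\<lambda>N. real (cnt 1 j N) / real N)"
proof (cases "j \<ge> 2")
  case True
  thus ?thesis using cnt_1_big[OF True] by (simp add: convergent_const)
next
  case False
  hence "j = 2 - int (nat (2 - j))" by simp
  thus ?thesis using cnt1_conv_k[of "nat (2 - j)"] by metis
qed

lemma conv_all: "convergent (\<lambda>N. real (cnt t j N) / real N)"
proof (induction t arbitrary: j rule: less_induct)
  case (less t)
  consider "t = 0" | "t = 1" | u where "t = 2*u" "u \<ge> 1" "u < t" | u where "t = 2*u+1" "u \<ge> 1" "u + 1 < t"
  proof -
    define u where "u = t div 2"
    have "t = 0 \<or> t = 1 \<or> (t = 2*u \<and> u \<ge> 1 \<and> u < t) \<or> (t = 2*u+1 \<and> u \<ge> 1 \<and> u + 1 < t)"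
      unfolding u_def by presburger
    thus ?thesis using that by blast
  qed
  then show ?case
  proof cases
    case 1 thus ?thesis using cnt0_lim convergent_def by blast
  next
    case 2 thus ?thesis using cnt1_conv by simp
  next
    case (3 u)
    from less[OF 3(3)] obtain L where L: "(\<lambda>N. real (cnt u j N) / real N) \<longlonglongrightarrow> L"
      unfolding convergent_def by blast
    have "(\<lambda>N. real (cnt u j ((N+1) div 2) + cnt u j (N div 2)) / real N) \<longlonglongrightarrow> L/2 + L/2"
      by (rule lim_comb[OF L L])
    thus ?thesis unfolding 3(1) cnt_even convergent_def by blast
  next
    case (4 u)
    from less[of u] 4 obtain L1 where L1: "(\<lambda>N. real (cnt u (j-1) N) / real N) \<longlonglongrightarrow> L1"
      unfolding convergent_def by fastforce
    from less[of "u+1"] 4 obtain L2 where L2: "(\<lambda>N. real (cnt (u+1) (j+1) N) / real N) \<longlonglongrightarrow> L2"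
      unfolding convergent_def by fastforce
    have "(\<lambda>N. real (cnt u (j-1) ((N+1) div 2) + cnt (u+1) (j+1) (N div 2)) / real N) \<longlonglongrightarrow> L1/2 + L2/2"
      by (rule lim_comb[OF L1 L2])
    thus ?thesis unfolding 4(1) cnt_odd convergent_def by blast
  qed
qed

lemma delta_lim: "(\<lambda>N. real (cnt t j N) / real N) \<longlonglongrightarrow> delta j t"
proof -
  have "delta j t = lim (\<lambda>N. real (cnt t j N) / real N)" by (simp add: delta_def cnt_def)
  thus ?thesis using conv_all convergent_LIMSEQ_iff by metis
qed

lemma delta_even: "delta j (2*u) = delta j u"
proof -
  have "(\<lambda>N. real (cnt u j ((N+1) div 2) + cnt u j (N div 2)) / real N) \<longlonglongrightarrow> delta j u/2 + delta j u/2"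
    by (rule lim_comb[OF delta_lim delta_lim])
  hence "(\<lambda>N. real (cnt (2*u) j N) / real N) \<longlonglongrightarrow> delta j u/2 + delta j u/2" unfolding cnt_even .
  from LIMSEQ_unique[OF delta_lim this] show ?thesis by simp
qed

lemma delta_odd: "delta j (2*u+1) = delta (j-1) u / 2 + delta (j+1) (u+1) / 2"
proof -
  have "(\<lambda>N. real (cnt u (j-1) ((N+1) div 2) + cnt (u+1) (j+1) (N div 2)) / real N) \<longlonglongrightarrow> delta (j-1) u/2 + delta (j+1) (u+1)/2"
    by (rule lim_comb[OF delta_lim delta_lim])
  hence "(\<lambda>N. real (cnt (2*u+1) j N) / real N) \<longlonglongrightarrow> delta (j-1) u/2 + delta (j+1) (u+1)/2" unfolding cnt_odd .
  from LIMSEQ_unique[OF delta_lim this] show ?thesis .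
qed

lemma delta_zero: "delta j 0 = (if j = 0 then 1 else 0)"
  using LIMSEQ_unique[OF delta_lim cnt0_lim] .

lemma delta_nonneg: "delta j t \<ge> 0"
  by (rule LIMSEQ_le_const[OF delta_lim]) auto

lemma delta_sum_le: "finite S \<Longrightarrow> (\<Sum>j\<in>S. delta j t) \<le> 1"
proof -
  assume S: "finite S"
  have lim: "(\<lambda>N. \<Sum>j\<in>S. real (cnt t j N) / real N) \<longlonglongrightarrow> (\<Sum>j\<in>S. delta j t)"
    by (intro tendsto_sum delta_lim)
  have "(\<Sum>j\<in>S. real (cnt t j N) / real N) \<le> 1" for N
  proof -
    define A where "A j = {n. n < N \<and> X t n = j}" for j
    have "(\<Sum>j\<in>S. cnt t j N) = card (\<Union>j\<in>S. A j)"
      unfolding cnt_X A_def by (rule card_UN_disjoint[symmetric]) (use S in auto)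
    also have "\<dots> \<le> card {..<N}" by (rule card_mono) (auto simp: A_def)
    finally have le: "(\<Sum>j\<in>S. cnt t j N) \<le> N" by simp
    have "(\<Sum>j\<in>S. real (cnt t j N) / real N) = real (\<Sum>j\<in>S. cnt t j N) / real N"
      by (simp add: sum_divide_distrib)
    also have "\<dots> \<le> 1"
    proof (cases "N = 0")
      case False
      have "real (\<Sum>j\<in>S. cnt t j N) \<le> real N" using le by (simp only: of_nat_le_iff)
      thus ?thesis using False by (simp add: divide_le_eq_1 del: of_nat_sum)
    qed simp
    finally show ?thesis .
  qed
  thus ?thesis by (intro LIMSEQ_le_const2[OF lim]) auto
qed

lemma delta_summable: "(\<lambda>j. delta j t) summable_on UNIV"
proof (rule nonneg_bdd_above_summable_on)
  show "bdd_above (sum (\<lambda>j. delta j t) ` {F. F \<subseteq> UNIV \<and> finite F})"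
    by (rule bdd_aboveI[of _ 1]) (auto intro: delta_sum_le)
qed (rule delta_nonneg)

lemma norm_ek: "norm (exp (2 * pi * \<i> * of_int k * of_real \<theta>)) = 1"
proof -
  have "2 * pi * \<i> * of_int k * of_real \<theta> = \<i> * complex_of_real (2 * pi * of_int k * \<theta>)" by simp
  thus ?thesis by (simp only: norm_exp_i_times)
qed

lemma cf_summable: "(\<lambda>k. complex_of_real (delta k t) * exp (2 * pi * \<i> * of_int k * of_real \<theta>)) summable_on UNIV"
proof (rule abs_summable_summable)
  have "(\<lambda>k. norm (complex_of_real (delta k t) * exp (2 * pi * \<i> * of_int k * of_real \<theta>))) = (\<lambda>k. delta k t)"
    by (rule ext) (simp add: norm_mult norm_ek delta_nonneg)
  thus "(\<lambda>k. norm (complex_of_real (delta k t) * exp (2 * pi * \<i> * of_int k * of_real \<theta>))) summable_on UNIV"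
    using delta_summable by simp
qed

lemma cf_zero: "charfun_delta 0 \<theta> = 1"
proof -
  have "charfun_delta 0 \<theta> = infsum (\<lambda>k::int. complex_of_real (delta k 0) * exp (2 * pi * \<i> * of_int k * of_real \<theta>)) {0}"
    unfolding charfun_delta_def by (rule infsum_cong_neutral) (auto simp: delta_zero)
  also have "\<dots> = 1" by (simp add: delta_zero)
  finally show ?thesis .
qed

lemma cf_even: "charfun_delta (2*u) \<theta> = charfun_delta u \<theta>"
  by (simp add: charfun_delta_def delta_even)

lemma bij_shift: "bij_betw (\<lambda>k::int. k + c) UNIV UNIV"
  by (rule bij_betwI[of _ _ _ "\<lambda>k. k - c"]) auto

lemma cf_odd: "charfun_delta (2*u+1) \<theta> = (exp (2 * pi * \<i> * of_real \<theta>) * charfun_delta u \<theta>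
     + exp (- (2 * pi * \<i> * of_real \<theta>)) * charfun_delta (u+1) \<theta>) / 2"
proof -
  define w where "w = 2 * pi * \<i> * complex_of_real \<theta>"
  define e where "e k = exp (2 * pi * \<i> * of_int k * complex_of_real \<theta>)" for k :: int
  define g where "g v k = complex_of_real (delta k v) * e k" for v k
  have gs: "g v summable_on UNIV" for v unfolding g_def e_def by (rule cf_summable)
  have e1: "e k = exp w * e (k - 1)" for k
  proof -
    have "exp w * e (k-1) = exp (w + 2 * pi * \<i> * of_int (k-1) * complex_of_real \<theta>)" by (simp only: e_def mult_exp_exp)
    also have "w + 2 * pi * \<i> * of_int (k-1) * complex_of_real \<theta> = 2 * pi * \<i> * of_int k * complex_of_real \<theta>"
      by (simp add: w_def algebra_simps)
    finally show ?thesis by (simp add: e_def)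
  qed
  have e2: "e k = exp (-w) * e (k + 1)" for k
  proof -
    have "exp (-w) * e (k+1) = exp (-w + 2 * pi * \<i> * of_int (k+1) * complex_of_real \<theta>)" by (simp only: e_def mult_exp_exp)
    also have "-w + 2 * pi * \<i> * of_int (k+1) * complex_of_real \<theta> = 2 * pi * \<i> * of_int k * complex_of_real \<theta>"
      by (simp add: w_def algebra_simps)
    finally show ?thesis by (simp add: e_def)
  qed
  have split: "complex_of_real (delta k (2*u+1)) * e k = exp w / 2 * g u (k - 1) + exp (-w) / 2 * g (u+1) (k + 1)" for k
  proof -
    define a b where "a = complex_of_real (delta (k-1) u)" "b = complex_of_real (delta (k+1) (u+1))"
    have "complex_of_real (delta k (2*u+1)) * e k = a/2 * e k + b/2 * e k"
      unfolding delta_odd a_b_def by (simp add: field_simps)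
    also have "a/2 * e k = exp w / 2 * (a * e (k-1))" by (subst e1[of k]) simp
    also have "b/2 * e k = exp (-w) / 2 * (b * e (k+1))" by (subst e2[of k]) simp
    finally show ?thesis by (simp add: g_def a_b_def)
  qed
  have s1: "(\<lambda>k. g u (k - 1)) summable_on UNIV"
    using summable_on_reindex_bij_betw[OF bij_shift[of "-1"], of "g u"] gs by simp
  have s2: "(\<lambda>k. g (u+1) (k + 1)) summable_on UNIV"
    using summable_on_reindex_bij_betw[OF bij_shift[of "1"], of "g (u+1)"] gs by simp
  have i1: "infsum (\<lambda>k. g u (k - 1)) UNIV = infsum (g u) UNIV"
    using infsum_reindex_bij_betw[OF bij_shift[of "-1"], of "g u"] by simp
  have i2: "infsum (\<lambda>k. g (u+1) (k + 1)) UNIV = infsum (g (u+1)) UNIV"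
    using infsum_reindex_bij_betw[OF bij_shift[of "1"], of "g (u+1)"] by simp
  have "charfun_delta (2*u+1) \<theta> = infsum (\<lambda>k. exp w / 2 * g u (k - 1) + exp (-w) / 2 * g (u+1) (k + 1)) UNIV"
    unfolding charfun_delta_def using split by (simp add: e_def)
  also have "\<dots> = infsum (\<lambda>k. exp w / 2 * g u (k - 1)) UNIV + infsum (\<lambda>k. exp (-w) / 2 * g (u+1) (k + 1)) UNIV"
    by (rule infsum_add) (intro summable_on_cmult_right s1 s2)+
  also have "\<dots> = exp w / 2 * infsum (\<lambda>k. g u (k - 1)) UNIV + exp (-w) / 2 * infsum (\<lambda>k. g (u+1) (k + 1)) UNIV"
    by (simp only: infsum_cmult_right')
  also have "\<dots> = exp w / 2 * infsum (g u) UNIV + exp (-w) / 2 * infsum (g (u+1)) UNIV"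
    by (simp only: i1 i2)
  also have "infsum (g u) UNIV = charfun_delta u \<theta>"
    unfolding charfun_delta_def by (rule infsum_cong) (simp add: g_def e_def)
  also have "infsum (g (u+1)) UNIV = charfun_delta (u+1) \<theta>"
    unfolding charfun_delta_def by (rule infsum_cong) (simp add: g_def e_def)
  finally show ?thesis by (simp add: w_def field_simps)
qed

lemma char_eq: "charfun_delta t \<theta> = Mh t (2 * pi * \<i> * of_real \<theta>)"
proof (induction t rule: less_induct)
  case (less t)
  define w where "w = 2 * pi * \<i> * complex_of_real \<theta>"
  consider "t = 0" | "t = 1" | u where "t = 2*u" "u \<ge> 1" "u < t" | u where "t = 2*u+1" "u \<ge> 1" "u + 1 < t"
  proof -
    define u where "u = t div 2"
    have "t = 0 \<or> t = 1 \<or> (t = 2*u \<and> u \<ge> 1 \<and> u < t) \<or> (t = 2*u+1 \<and> u \<ge> 1 \<and> u + 1 < t)"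
      unfolding u_def by presburger
    thus ?thesis using that by blast
  qed
  then show ?case
  proof cases
    case 1 thus ?thesis by (simp add: cf_zero)
  next
    case 2
    have c1: "charfun_delta 1 \<theta> = (exp w * 1 + exp (-w) * charfun_delta 1 \<theta>) / 2"
      using cf_odd[of 0 \<theta>] by (simp add: cf_zero w_def)
    have nw: "norm (exp (-w)) = 1"
    proof -
      have "-w = \<i> * complex_of_real (- 2 * pi * \<theta>)" by (simp add: w_def)
      thus ?thesis by (simp only: norm_exp_i_times)
    qed
    have nz: "2 - exp (-w) \<noteq> 0"
    proof
      assume "2 - exp (-w) = 0"
      hence "exp (-w) = 2" by simp
      with nw show False by simp
    qed
    from c1 have "charfun_delta 1 \<theta> * (2 - exp (-w)) = exp w" by (simp add: field_simps)
    hence "charfun_delta 1 \<theta> = exp w / (2 - exp (-w))" using nz by (simp add: field_simps)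
    thus ?thesis using 2 by (simp add: Mh_1 w_def)
  next
    case (3 u)
    thus ?thesis using less[of u] by (simp add: cf_even)
  next
    case (4 u)
    have ih1: "charfun_delta u \<theta> = Mh u w" using less[of u] 4 by (simp add: w_def)
    have ih2: "charfun_delta (u+1) \<theta> = Mh (u+1) w" using less[of "u+1"] 4 by (simp add: w_def)
    have "charfun_delta t \<theta> = (exp w * charfun_delta u \<theta> + exp (-w) * charfun_delta (u+1) \<theta>)/2"
      unfolding 4(1) w_def by (rule cf_odd)
    also have "\<dots> = (exp w * Mh u w + exp (-w) * Mh (u+1) w)/2" unfolding ih1 ih2 ..
    also have "\<dots> = Mh (2*u+1) w" by (rule Mh_odd[symmetric, OF 4(2)])
    finally show ?thesis unfolding 4(1) w_def .
  qed
qed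

lemma lim_over_k2: "(\<lambda>k::nat. (C::real) / (real k + 2)) \<longlonglongrightarrow> 0"
proof -
  have "(\<lambda>k. C / real (k+2)) \<longlonglongrightarrow> 0"
    using LIMSEQ_ignore_initial_segment[OF lim_const_over_n[of C], of 2] by simp
  thus ?thesis by (simp add: add.commute)
qed

lemma deriv_real1:
  fixes G :: "complex \<Rightarrow> complex"
  assumes holo: "G holomorphic_on ball 0 r" and re: "\<And>x::real. \<bar>x\<bar> < r \<Longrightarrow> G (of_real x) \<in> \<real>"
    and x: "\<bar>x\<bar> < r"
  shows "deriv G (of_real x) \<in> \<real>"
proof -
  have xin: "complex_of_real x \<in> ball 0 r" using x by simp
  have "(G has_field_derivative deriv G (of_real x)) (at (of_real x))"
    using holomorphic_derivI[OF holo open_ball xin] .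
  hence lim: "((\<lambda>y. (G y - G (of_real x)) / (y - of_real x)) \<longlongrightarrow> deriv G (of_real x)) (at (of_real x))"
    using has_field_derivative_iff by blast
  define h where "h k = (r - \<bar>x\<bar>) / (real k + 2)" for k :: nat
  define y where "y k = complex_of_real (x + h k)" for k
  have hpos: "h k > 0" for k using x by (simp add: h_def)
  have hsmall: "h k < r - \<bar>x\<bar>" for k
  proof -
    have "\<bar>x\<bar> * real k \<le> r * real k" using x by (intro mult_right_mono) auto
    thus ?thesis using x by (simp add: h_def field_simps)
  qed
  have h0: "h \<longlonglongrightarrow> 0" unfolding h_def by (rule lim_over_k2)
  have "y \<longlonglongrightarrow> of_real (x + 0)" unfolding y_def by (intro tendsto_intros h0)
  moreover have "\<forall>k. y k \<noteq> of_real x"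
  proof
    fix k have "x + h k \<noteq> x" using hpos[of k] by simp
    thus "y k \<noteq> of_real x" unfolding y_def of_real_eq_iff .
  qed
  ultimately have "filterlim y (at (of_real x)) sequentially"
    by (intro filterlim_atI) (auto intro: always_eventually)
  from filterlim_compose[OF lim this]
  have l2: "(\<lambda>k. (G (y k) - G (of_real x)) / (y k - of_real x)) \<longlonglongrightarrow> deriv G (of_real x)" .
  have "(\<lambda>k. Im ((G (y k) - G (of_real x)) / (y k - of_real x))) \<longlonglongrightarrow> Im (deriv G (of_real x))"
    by (intro tendsto_intros l2)
  moreover have "Im ((G (y k) - G (of_real x)) / (y k - of_real x)) = 0" for k
  proof -
    have "\<bar>x + h k\<bar> < r" using hpos[of k] hsmall[of k] by linarith
    hence "G (y k) \<in> \<real>" unfolding y_def by (rule re)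
    moreover have "G (of_real x) \<in> \<real>" using x by (rule re)
    moreover have "y k - of_real x \<in> \<real>" by (simp add: y_def)
    ultimately have "(G (y k) - G (of_real x)) / (y k - of_real x) \<in> \<real>" by auto
    thus ?thesis by (simp add: complex_is_Real_iff)
  qed
  ultimately have "(\<lambda>k. 0) \<longlonglongrightarrow> Im (deriv G (of_real x))" by simp
  hence "Im (deriv G (of_real x)) = 0" by (simp add: LIMSEQ_const_iff)
  thus ?thesis by (simp add: complex_is_Real_iff)
qed

lemma deriv_real:
  fixes G :: "complex \<Rightarrow> complex"
  assumes holo: "G holomorphic_on ball 0 r" and re: "\<And>x::real. \<bar>x\<bar> < r \<Longrightarrow> G (of_real x) \<in> \<real>"
  shows "\<bar>x\<bar> < r \<Longrightarrow> (deriv ^^ n) G (of_real x) \<in> \<real>"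
proof (induction n arbitrary: x)
  case 0 then show ?case using re by simp
next
  case (Suc n)
  have "deriv ((deriv ^^ n) G) (of_real x) \<in> \<real>"
    by (rule deriv_real1[OF holomorphic_higher_deriv[OF holo open_ball] Suc.IH Suc.prems])
  thus ?case by simp
qed

lemma PZ0:
  fixes b :: "nat \<Rightarrow> complex"
  assumes e: "\<epsilon> > 0" and s: "\<And>s. 0 < s \<Longrightarrow> s < \<epsilon> \<Longrightarrow> (\<lambda>m. b m * (\<i> * of_real s)^m) sums 0"
  shows "b 0 = 0"
proof -
  define f where "f x = (\<Sum>m. b m * x^m)" for x
  have sm0: "summable (\<lambda>m. b m * (\<i> * of_real (\<epsilon>/2))^m)" using s[of "\<epsilon>/2"] e sums_summable by auto
  have sm: "(\<lambda>m. b m * x^m) sums f x" if "norm x < \<epsilon>/2" for x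
  proof -
    have "norm x < norm (\<i> * complex_of_real (\<epsilon>/2))" using that e by (simp add: norm_mult)
    from powser_inside[OF sm0 this] show ?thesis unfolding f_def by (rule summable_sums)
  qed
  have lim: "(f \<longlongrightarrow> b 0) (at 0)" by (rule powser_limit_0[of "\<epsilon>/2"]) (use e sm in auto)
  define y where "y k = \<i> * complex_of_real (\<epsilon> / (real k + 2))" for k :: nat
  have yl: "y \<longlonglongrightarrow> \<i> * of_real 0" unfolding y_def
    by (intro tendsto_intros lim_over_k2)
  moreover have "\<forall>k. y k \<noteq> 0"
  proof
    fix k :: nat
    define q where "q = \<epsilon> / (real k + 2)"
    have "q > 0" unfolding q_def using e by (intro divide_pos_pos) auto
    moreover have "y k = \<i> * complex_of_real q" unfolding y_def q_def ..
    ultimately show "y k \<noteq> 0" by simp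
  qed
  ultimately have "filterlim y (at 0) sequentially"
    by (intro filterlim_atI) (auto intro: always_eventually)
  from filterlim_compose[OF lim this] have l2: "(\<lambda>k. f (y k)) \<longlonglongrightarrow> b 0" .
  have "f (y k) = 0" for k
  proof -
    have p1: "0 < \<epsilon> / (real k + 2)" using e by (intro divide_pos_pos) auto
    have "\<epsilon> / (real k + 2) \<le> \<epsilon> / 2" using e by (intro divide_left_mono) auto
    hence p2: "\<epsilon> / (real k + 2) < \<epsilon>" using e by linarith
    note p1 p2
    from s[OF this] have "(\<lambda>m. b m * y k ^ m) sums 0" by (simp add: y_def)
    thus ?thesis unfolding f_def by (simp add: sums_iff)
  qed
  with l2 have "(\<lambda>k. 0) \<longlonglongrightarrow> b 0" by simp
  thus ?thesis by (simp add: LIMSEQ_const_iff)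
qed

lemma PZ:
  fixes b :: "nat \<Rightarrow> complex"
  assumes e: "\<epsilon> > 0" and s: "\<And>s. 0 < s \<Longrightarrow> s < \<epsilon> \<Longrightarrow> (\<lambda>m. b m * (\<i> * of_real s)^m) sums 0"
  shows "b m = 0"
  using s
proof (induction m arbitrary: b)
  case 0 then show ?case using PZ0[OF e] by blast
next
  case (Suc m)
  have b0: "b 0 = 0" using PZ0[OF e] Suc.prems by blast
  have "(\<lambda>n. b (Suc n) * (\<i> * of_real s)^n) sums 0" if "0 < s" "s < \<epsilon>" for s
  proof -
    define x where "x = \<i> * complex_of_real s"
    have xnz: "x \<noteq> 0" using that by (simp add: x_def)
    have "(\<lambda>n. b n * x^n) sums 0" using Suc.prems[OF that] by (simp add: x_def)
    hence "(\<lambda>n. b (Suc n) * x^(Suc n)) sums 0" using b0 by (subst sums_Suc_iff) simp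
    hence "(\<lambda>n. b (Suc n) * x^(Suc n) * inverse x) sums (0 * inverse x)" by (rule sums_mult2)
    moreover have "b (Suc n) * x^(Suc n) * inverse x = b (Suc n) * x^n" for n using xnz by (simp add: field_simps)
    ultimately show ?thesis by (simp add: x_def)
  qed
  from Suc.IH[of "\<lambda>n. b (Suc n)", OF this] show ?case by simp
qed

lemma kappa_eq:
  assumes ch: "\<And>\<theta>. charfun_delta t \<theta> = Mh t (2 * pi * \<i> * of_real \<theta>)"
  shows "kappa j t = Re ((deriv ^^ j) (Lh t) 0)"
proof -
  obtain r where r: "r > 0" "r \<le> 1/2" "Lh t holomorphic_on ball 0 r" "\<forall>w\<in>ball 0 r. Re (Mh t w) > 1/2"
    using Lh_props by blast
  define c0 where "c0 m = Re ((deriv ^^ m) (Lh t) 0)" for m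
  have realL: "Lh t (of_real x) \<in> \<real>" if "\<bar>x\<bar> < r" for x :: real
  proof -
    have "Re (Mh t (of_real x)) > 1/2" using r(4) that by simp
    thus ?thesis unfolding Lh_def using Mh_real[of t x] by (intro Ln_in_Reals) auto
  qed
  have c0r: "complex_of_real (c0 m) = (deriv ^^ m) (Lh t) 0" for m
    using deriv_real[OF r(3) realL, of 0 m] r(1) unfolding c0_def by (simp add: Reals_cases)
  let ?P = "\<lambda>c :: nat \<Rightarrow> real. \<forall>\<^sub>F \<theta> in nhds (0::real).
      (\<lambda>m. complex_of_real (c m) / of_nat (fact m) * (2 * pi * \<i> * of_real \<theta>) ^ m)
        sums Ln (charfun_delta t \<theta>)"
  have P0: "?P c0"
  proof -
    have "eventually (\<lambda>\<theta>::real. \<theta> \<in> {-r/(2*pi)<..<r/(2*pi)}) (nhds 0)"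
      using r(1) by (intro eventually_nhds_in_open) auto
    thus ?thesis
    proof eventually_elim
      case (elim \<theta>)
      define w where "w = 2 * pi * \<i> * complex_of_real \<theta>"
      have "norm w = 2 * pi * \<bar>\<theta>\<bar>" by (simp add: w_def norm_mult)
      also have "\<dots> < r" using elim pi_gt_zero
        by (cases "\<theta> \<ge> 0") (auto simp: field_simps abs_if)
      finally have wb: "w \<in> ball 0 r" by simp
      from holomorphic_power_series[OF r(3) wb]
      have "(\<lambda>n. (deriv ^^ n) (Lh t) 0 / fact n * w ^ n) sums Lh t w" by simp
      thus ?case by (simp add: c0r ch Lh_def w_def)
    qed
  qed
  have uniq: "c = c0" if Pc: "?P c" for c
  proof
    fix m
    from eventually_conj[OF Pc P0] obtain d where d: "d > 0"
      "\<And>\<theta>::real. dist \<theta> 0 < d \<Longrightarrow>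
        (\<lambda>m. complex_of_real (c m) / of_nat (fact m) * (2 * pi * \<i> * of_real \<theta>) ^ m) sums Ln (charfun_delta t \<theta>) \<and>
        (\<lambda>m. complex_of_real (c0 m) / of_nat (fact m) * (2 * pi * \<i> * of_real \<theta>) ^ m) sums Ln (charfun_delta t \<theta>)"
      unfolding eventually_nhds_metric by blast
    define b where "b m = (complex_of_real (c m) - complex_of_real (c0 m)) / fact m" for m
    have bs: "(\<lambda>m. b m * (\<i> * of_real s)^m) sums 0" if s: "0 < s" "s < 2 * pi * d" for s
    proof -
      define \<theta> where "\<theta> = s / (2 * pi)"
      have "dist \<theta> 0 < d" using s pi_gt_zero by (simp add: \<theta>_def field_simps)
      from d(2)[OF this] have A: "(\<lambda>m. complex_of_real (c m) / of_nat (fact m) * (2 * pi * \<i> * of_real \<theta>) ^ m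
          - complex_of_real (c0 m) / of_nat (fact m) * (2 * pi * \<i> * of_real \<theta>) ^ m) sums (Ln (charfun_delta t \<theta>) - Ln (charfun_delta t \<theta>))"
        by (intro sums_diff) auto
      have weq: "2 * pi * \<i> * complex_of_real \<theta> = \<i> * of_real s" using pi_gt_zero by (simp add: \<theta>_def field_simps)
      have B: "(\<lambda>m. complex_of_real (c m) / of_nat (fact m) * (\<i> * of_real s) ^ m
          - complex_of_real (c0 m) / of_nat (fact m) * (\<i> * of_real s) ^ m) sums 0"
        using A unfolding weq by simp
      have "(\<lambda>m. complex_of_real (c m) / of_nat (fact m) * (\<i> * of_real s) ^ m
          - complex_of_real (c0 m) / of_nat (fact m) * (\<i> * of_real s) ^ m) = (\<lambda>m. b m * (\<i> * of_real s)^m)"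
        by (rule ext) (simp add: b_def diff_divide_distrib left_diff_distrib)
      with B show ?thesis by simp
    qed
    have "b m = 0"
    proof (rule PZ[of "2 * pi * d" b m])
      show "0 < 2 * pi * d" using d(1) pi_gt_zero by simp
    next
      fix s :: real assume "0 < s" "s < 2 * pi * d" thus "(\<lambda>m. b m * (\<i> * of_real s)^m) sums 0" by (rule bs)
    qed
    thus "c m = c0 m" by (simp add: b_def)
  qed
  have "(THE c. ?P c) = c0" using P0 uniq by (rule the_equality)
  thus ?thesis unfolding kappa_def c0_def by simp
qed


lemma kdiff: "kappa j (t+1) - kappa j t = fact j * Re (fps_nth (Kf t) j)"
proof -
  have k: "kappa j s = Re ((deriv ^^ j) (Lh s) 0)" for s by (rule kappa_eq[OF char_eq])
  have h: "(deriv ^^ j) (Lh s) 0 = fact j * fps_nth (Hf s) j" for s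
    by (simp add: Hf_def fps_expansion_def)
  have "kappa j (t+1) - kappa j t = Re (fact j * fps_nth (Hf (t+1)) j) - Re (fact j * fps_nth (Hf t) j)"
    unfolding k h ..
  also have "\<dots> = Re (fact j * (fps_nth (Hf (t+1)) j - fps_nth (Hf t) j))"
    by (simp add: algebra_simps)
  also have "\<dots> = fact j * Re (fps_nth (Kf t) j)"
    by (simp add: Kf_def)
  finally show ?thesis .
qed

theorem lemma2p2:
  fixes t :: nat
  shows "\<bar>kappa 2 (t + 1) - kappa 2 t\<bar> \<le> 2 \<and>
         \<bar>kappa 3 (t + 1) - kappa 3 t\<bar> \<le> 6 \<and>
         \<bar>kappa 4 (t + 1) - kappa 4 t\<bar> \<le> 28 \<and>
         \<bar>kappa 5 (t + 1) - kappa 5 t\<bar> \<le> 240"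
proof -
  obtain a b c d :: real where h: "fps_nth (Kf t) 2 = of_real a" "fps_nth (Kf t) 3 = of_real b"
     "fps_nth (Kf t) 4 = of_real c" "fps_nth (Kf t) 5 = of_real d" and bd: "\<bar>a\<bar> \<le> 1" "\<bar>b\<bar> \<le> 1" "\<bar>c\<bar> \<le> 7/6" "\<bar>d\<bar> \<le> 2"
    using Inv_all[of t] unfolding Inv_def by blast
  have f: "fact 2 = (2::real)" "fact 3 = (6::real)" "fact 4 = (24::real)" "fact 5 = (120::real)"
    by (simp_all add: fact_numeral)
  have "\<bar>kappa 2 (t + 1) - kappa 2 t\<bar> = 2 * \<bar>a\<bar>" unfolding kdiff h f by (simp add: abs_mult)
  moreover have "\<bar>kappa 3 (t + 1) - kappa 3 t\<bar> = 6 * \<bar>b\<bar>" unfolding kdiff h f by (simp add: abs_mult)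
  moreover have "\<bar>kappa 4 (t + 1) - kappa 4 t\<bar> = 24 * \<bar>c\<bar>" unfolding kdiff h f by (simp add: abs_mult)
  moreover have "\<bar>kappa 5 (t + 1) - kappa 5 t\<bar> = 120 * \<bar>d\<bar>" unfolding kdiff h f by (simp add: abs_mult)
  ultimately show ?thesis using bd by linarith
qed

end
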